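(* Let $F$ be $\mathbb{C}$ or $\mathbb{R}$ and let $\mathfrak{L}$ be a solvable (left) Leibniz algebra over $F$ whose nilradical is the $r$-dimensional abelian algebra $A(r)$ with basis $n_1,\dots,n_r$. Choose elements $x_1,\dots,x_s\in\mathfrak{L}\setminus A(r)$ so that $\{n_1,\dots,n_r,x_1,\dots,x_s\}$ is a basis of $\mathfrak{L}$, and write the products as $$[x_\alpha,n_i]=\sum_{j=1}^r L^\alpha_{ij}n_j,\qquad [n_i,x_\alpha]=\sum_{j=1}^r R^\alpha_{ij}n_j,\qquad [x_\alpha,x_\beta]=\sum_{j=1}^r\sigma^{\alpha\beta}_j n_j,$$ with $L^\alpha,R^\alpha\in F^{r\times r}$ and $\sigma^{\alpha\beta}_j\in F$, for $1\le\alpha,\beta\le s$, $1\le i\le r$. Let $\sigma^{\alpha\beta}=(\sigma^{\alpha\beta}_1,\dots,\sigma^{\alpha\beta}_r)^T\in F^r$. Then for all $\alpha,\beta,\gamma\in\{1,\dots,s\}$, both $\sigma^{\alpha\alpha}$ and $\sigma^{\alpha\beta}+\sigma^{\beta\alpha}$ lie in the null space of $(R^\gamma)^T$, i.e. $(R^\gamma)^T\sigma^{\alpha\alpha}=0$ and $(R^\gamma)^T(\sigma^{\alpha\beta}+\sigma^{\beta\alpha})=0$.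
   Context: A (left) Leibniz algebra is a vector space with a bilinear product $[\cdot,\cdot]$ satisfying $[x,[y,z]]=[[x,y],z]+[y,[x,z]]$ for all $x,y,z$. It is solvable if its derived series $\mathfrak{L}^{(1)}=[\mathfrak{L},\mathfrak{L}]$, $\mathfrak{L}^{(n+1)}=[\mathfrak{L}^{(n)},\mathfrak{L}^{(n)}]$ eventually vanishes; nilpotent if the lower central series $\mathfrak{L}^2=[\mathfrak{L},\mathfrak{L}]$, $\mathfrak{L}^{n+1}=[\mathfrak{L},\mathfrak{L}^n]$ eventually vanishes. The nilradical is the unique maximal nilpotent ideal. $A(r)$ denotes the $r$-dimensional algebra with all products zero. *)

theory Defs
  imports Complex_Main
begin

definition bilinear_prod :: "('f::field \<Rightarrow> 'v::ab_group_add \<Rightarrow> 'v) \<Rightarrow> ('v \<Rightarrow> 'v \<Rightarrow> 'v) \<Rightarrow> bool" where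
  "bilinear_prod scale br \<longleftrightarrow>
     (\<forall>x y z. br (x + y) z = br x z + br y z) \<and>
     (\<forall>x y z. br x (y + z) = br x y + br x z) \<and>
     (\<forall>c x y. br (scale c x) y = scale c (br x y)) \<and>
     (\<forall>c x y. br x (scale c y) = scale c (br x y))"

definition leibniz_algebra :: "('f::field \<Rightarrow> 'v::ab_group_add \<Rightarrow> 'v) \<Rightarrow> ('v \<Rightarrow> 'v \<Rightarrow> 'v) \<Rightarrow> bool" where
  "leibniz_algebra scale br \<longleftrightarrow>
     vector_space scale \<and> bilinear_prod scale br \<and>
     (\<forall>x y z. br x (br y z) = br (br x y) z + br y (br x z))"

definition prod_sub :: "('f::field \<Rightarrow> 'v::ab_group_add \<Rightarrow> 'v) \<Rightarrow> ('v \<Rightarrow> 'v \<Rightarrow> 'v) \<Rightarrow> 'v set \<Rightarrow> 'v set \<Rightarrow> 'v set" where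
  "prod_sub scale br A B = module.span scale {br a b | a b. a \<in> A \<and> b \<in> B}"

fun derived :: "('f::field \<Rightarrow> 'v::ab_group_add \<Rightarrow> 'v) \<Rightarrow> ('v \<Rightarrow> 'v \<Rightarrow> 'v) \<Rightarrow> 'v set \<Rightarrow> nat \<Rightarrow> 'v set" where
  "derived scale br S 0 = S"
| "derived scale br S (Suc n) = prod_sub scale br (derived scale br S n) (derived scale br S n)"

text \<open>Lower central series of a subalgebra S: S^1 = S, S^(n+1) = [S, S^n]
  (index k here corresponds to S^(k+1)).\<close>
fun lower_central :: "('f::field \<Rightarrow> 'v::ab_group_add \<Rightarrow> 'v) \<Rightarrow> ('v \<Rightarrow> 'v \<Rightarrow> 'v) \<Rightarrow> 'v set \<Rightarrow> nat \<Rightarrow> 'v set" where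
  "lower_central scale br S 0 = S"
| "lower_central scale br S (Suc n) = prod_sub scale br S (lower_central scale br S n)"

definition solvable_alg :: "('f::field \<Rightarrow> 'v::ab_group_add \<Rightarrow> 'v) \<Rightarrow> ('v \<Rightarrow> 'v \<Rightarrow> 'v) \<Rightarrow> bool" where
  "solvable_alg scale br \<longleftrightarrow> (\<exists>n. derived scale br UNIV n = {0})"

definition nilpotent_sub :: "('f::field \<Rightarrow> 'v::ab_group_add \<Rightarrow> 'v) \<Rightarrow> ('v \<Rightarrow> 'v \<Rightarrow> 'v) \<Rightarrow> 'v set \<Rightarrow> bool" where
  "nilpotent_sub scale br S \<longleftrightarrow> (\<exists>n. lower_central scale br S n = {0})"

definition is_ideal :: "('f::field \<Rightarrow> 'v::ab_group_add \<Rightarrow> 'v) \<Rightarrow> ('v \<Rightarrow> 'v \<Rightarrow> 'v) \<Rightarrow> 'v set \<Rightarrow> bool" where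
  "is_ideal scale br I \<longleftrightarrow> module.subspace scale I \<and>
     (\<forall>x y. y \<in> I \<longrightarrow> br x y \<in> I \<and> br y x \<in> I)"

definition is_nilradical :: "('f::field \<Rightarrow> 'v::ab_group_add \<Rightarrow> 'v) \<Rightarrow> ('v \<Rightarrow> 'v \<Rightarrow> 'v) \<Rightarrow> 'v set \<Rightarrow> bool" where
  "is_nilradical scale br N \<longleftrightarrow> is_ideal scale br N \<and> nilpotent_sub scale br N \<and>
     (\<forall>J. is_ideal scale br J \<and> nilpotent_sub scale br J \<and> N \<subseteq> J \<longrightarrow> J = N)"

text \<open>Field isomorphism (used to say F is R or C up to isomorphism).\<close>
definition field_iso :: "('a::field \<Rightarrow> 'b::field) \<Rightarrow> bool" where
  "field_iso \<phi> \<longleftrightarrow> bij \<phi> \<and> (\<forall>a b. \<phi> (a + b) = \<phi> a + \<phi> b) \<and>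
     (\<forall>a b. \<phi> (a * b) = \<phi> a * \<phi> b) \<and> \<phi> 1 = 1"

end

theory Submission
  imports Defs
begin


lemma br_sum_left:
  assumes "bilinear_prod scale br" "finite A"
  shows "br (sum f A) z = (\<Sum>i\<in>A. br (f i) z)"
  using assms(2)
proof (induction rule: finite_induct)
  case empty
  have "br (0+0) z = br 0 z + br 0 z" using assms(1) unfolding bilinear_prod_def by blast
  then show ?case by simp
next
  case (insert a A)
  then show ?case using assms(1) unfolding bilinear_prod_def by simp
qed

lemma key_coeff:
  fixes scale :: "'f::field \<Rightarrow> 'v::ab_group_add \<Rightarrow> 'v"
    and r k :: nat
  assumes vs: "vector_space scale" and bp: "bilinear_prod scale br"
    and inj_n: "inj_on n {1..r}"
    and ind: "\<not> module.dependent scale (n ` {1..r})"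
    and prodR: "\<forall>i \<in> {1..r}. br (n i) xg = (\<Sum>j = 1..r. scale (R i j) (n j))"
    and z: "br (\<Sum>j = 1..r. scale (c j) (n j)) xg = 0"
    and k: "k \<in> {1..r}"
  shows "(\<Sum>j = 1..r. R j k * c j) = 0"
proof -
  interpret vector_space scale by (rule vs)
  have "br (\<Sum>j = 1..r. scale (c j) (n j)) xg = (\<Sum>j = 1..r. br (scale (c j) (n j)) xg)"
    using br_sum_left[OF bp, of "{1..r}" "\<lambda>j. scale (c j) (n j)" xg] by simp
  also have "\<dots> = (\<Sum>j = 1..r. scale (c j) (\<Sum>k = 1..r. scale (R j k) (n k)))"
    using bp prodR unfolding bilinear_prod_def by (intro sum.cong) auto
  also have "\<dots> = (\<Sum>j = 1..r. \<Sum>k = 1..r. scale (c j * R j k) (n k))"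
    by (simp add: scale_sum_right)
  also have "\<dots> = (\<Sum>k = 1..r. \<Sum>j = 1..r. scale (c j * R j k) (n k))"
    by (rule sum.swap)
  also have "\<dots> = (\<Sum>k = 1..r. scale (\<Sum>j = 1..r. R j k * c j) (n k))"
    by (simp add: scale_sum_left mult.commute)
  finally have eq: "(\<Sum>k = 1..r. scale (\<Sum>j = 1..r. R j k * c j) (n k)) = 0" using z by simp
  define u where "u = (\<lambda>v. \<Sum>j = 1..r. R j (inv_into {1..r} n v) * c j)"
  have "(\<Sum>v\<in>n ` {1..r}. scale (u v) v) = (\<Sum>k = 1..r. scale (u (n k)) (n k))"
    by (rule sum.reindex[OF inj_n, unfolded comp_def])
  also have "\<dots> = (\<Sum>k = 1..r. scale (\<Sum>j = 1..r. R j k * c j) (n k))"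
    unfolding u_def using inj_n by (intro sum.cong) auto
  finally have "(\<Sum>v\<in>n ` {1..r}. scale (u v) v) = 0" using eq by simp
  then have "u (n k) = 0"
    using independentD[OF ind, of "n ` {1..r}" u "n k"] k by auto
  then show ?thesis unfolding u_def using inj_n k by simp
qed

lemma sq_zero:
  assumes "leibniz_algebra scale br"
  shows "br (br a a) z = 0"
proof -
  have "br a (br a z) = br (br a a) z + br a (br a z)"
    using assms unfolding leibniz_algebra_def by blast
  then show ?thesis by simp
qed

theorem lemma3p1:
  fixes scale :: "'f::field \<Rightarrow> 'v::ab_group_add \<Rightarrow> 'v"
    and br :: "'v \<Rightarrow> 'v \<Rightarrow> 'v"
    and r s :: nat
    and n x :: "nat \<Rightarrow> 'v"
    and L R :: "nat \<Rightarrow> nat \<Rightarrow> nat \<Rightarrow> 'f"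
    and \<sigma> :: "nat \<Rightarrow> nat \<Rightarrow> nat \<Rightarrow> 'f"
  assumes F_RC: "(\<exists>\<phi>::'f \<Rightarrow> real. field_iso \<phi>) \<or> (\<exists>\<phi>::'f \<Rightarrow> complex. field_iso \<phi>)"
    and leib: "leibniz_algebra scale br"
    and solv: "solvable_alg scale br"
    and nilrad: "is_nilradical scale br (module.span scale (n ` {1..r}))"
    and abelian: "\<forall>u \<in> module.span scale (n ` {1..r}). \<forall>v \<in> module.span scale (n ` {1..r}). br u v = 0"
    and inj_n: "inj_on n {1..r}"
    and inj_x: "inj_on x {1..s}"
    and disj: "n ` {1..r} \<inter> x ` {1..s} = {}"
    and x_notin: "\<forall>\<alpha> \<in> {1..s}. x \<alpha> \<notin> module.span scale (n ` {1..r})"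
    and indep: "\<not> module.dependent scale (n ` {1..r} \<union> x ` {1..s})"
    and spanning: "module.span scale (n ` {1..r} \<union> x ` {1..s}) = UNIV"
    and prodL: "\<forall>\<alpha> \<in> {1..s}. \<forall>i \<in> {1..r}. br (x \<alpha>) (n i) = (\<Sum>j = 1..r. scale (L \<alpha> i j) (n j))"
    and prodR: "\<forall>\<alpha> \<in> {1..s}. \<forall>i \<in> {1..r}. br (n i) (x \<alpha>) = (\<Sum>j = 1..r. scale (R \<alpha> i j) (n j))"
    and prodS: "\<forall>\<alpha> \<in> {1..s}. \<forall>\<beta> \<in> {1..s}. br (x \<alpha>) (x \<beta>) = (\<Sum>j = 1..r. scale (\<sigma> \<alpha> \<beta> j) (n j))"
  shows "\<forall>\<alpha> \<in> {1..s}. \<forall>\<beta> \<in> {1..s}. \<forall>\<gamma> \<in> {1..s}. \<forall>k \<in> {1..r}.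
           (\<Sum>j = 1..r. R \<gamma> j k * \<sigma> \<alpha> \<alpha> j) = 0 \<and>
           (\<Sum>j = 1..r. R \<gamma> j k * (\<sigma> \<alpha> \<beta> j + \<sigma> \<beta> \<alpha> j)) = 0"
proof (intro ballI conjI)
  fix \<alpha> \<beta> \<gamma> k assume a: "\<alpha> \<in> {1..s}" and b: "\<beta> \<in> {1..s}" and g: "\<gamma> \<in> {1..s}" and k: "k \<in> {1..r}"
  have vs: "vector_space scale" and bp: "bilinear_prod scale br"
    using leib unfolding leibniz_algebra_def by auto
  interpret vector_space scale by (rule vs)
  have ind: "\<not> dependent (n ` {1..r})"
    using indep dependent_mono[of "n ` {1..r}" "n ` {1..r} \<union> x ` {1..s}"] by blast
  have pR: "\<forall>i \<in> {1..r}. br (n i) (x \<gamma>) = (\<Sum>j = 1..r. scale (R \<gamma> i j) (n j))"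
    using prodR g by blast
  have addl: "\<And>p q w. br (p + q) w = br p w + br q w"
   and addr: "\<And>p q w. br w (p + q) = br w p + br w q"
    using bp unfolding bilinear_prod_def by blast+
  have "br (br (x \<alpha>) (x \<alpha>)) (x \<gamma>) = 0" by (rule sq_zero[OF leib])
  then have z1: "br (\<Sum>j = 1..r. scale (\<sigma> \<alpha> \<alpha> j) (n j)) (x \<gamma>) = 0"
    using prodS a by simp
  show "(\<Sum>j = 1..r. R \<gamma> j k * \<sigma> \<alpha> \<alpha> j) = 0"
    by (rule key_coeff[OF vs bp inj_n ind pR z1 k])
  have "br (br (x \<alpha> + x \<beta>) (x \<alpha> + x \<beta>)) (x \<gamma>) = 0" by (rule sq_zero[OF leib])
  then have "br (br (x \<alpha>) (x \<alpha>)) (x \<gamma>) + br (br (x \<alpha>) (x \<beta>) + br (x \<beta>) (x \<alpha>)) (x \<gamma>)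
      + br (br (x \<beta>) (x \<beta>)) (x \<gamma>) = 0"
    by (simp add: addl addr algebra_simps)
  then have "br (br (x \<alpha>) (x \<beta>) + br (x \<beta>) (x \<alpha>)) (x \<gamma>) = 0"
    by (simp add: sq_zero[OF leib])
  moreover have "br (x \<alpha>) (x \<beta>) + br (x \<beta>) (x \<alpha>) = (\<Sum>j = 1..r. scale (\<sigma> \<alpha> \<beta> j + \<sigma> \<beta> \<alpha> j) (n j))"
    using prodS a b by (simp add: scale_left_distrib sum.distrib)
  ultimately have z2: "br (\<Sum>j = 1..r. scale (\<sigma> \<alpha> \<beta> j + \<sigma> \<beta> \<alpha> j) (n j)) (x \<gamma>) = 0" by simp
  show "(\<Sum>j = 1..r. R \<gamma> j k * (\<sigma> \<alpha> \<beta> j + \<sigma> \<beta> \<alpha> j)) = 0"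
    by (rule key_coeff[OF vs bp inj_n ind pR z2 k])
qed

end
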